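(* Let $X$ be a real Banach space and $Z,Y$ closed subspaces with $Z\subseteq Y\subseteq X$. If $Z$ has property-$(HB)$ in $X$, then $Z$ has property-$(HB)$ in $Y$.
   Context: For a closed subspace $V$ of a Banach space $E$, $V^\perp=\{e^*\in E^*:e^*|_V=0\}$. $V$ has property-$(HB)$ in $E$ if there is a linear projection $P$ on $E^*$ with range $V^\perp$ and $\|P\|=1$ such that, writing $G=(I-P)(E^* )$, for every $e^*=v^\#+v^\perp$ with $v^\#\in G$, $0\neq v^\perp\in V^\perp$, one has $\|e^*\|>\|v^\#\|$ and $\|e^*\|\ge\|v^\perp\|$. *)

theory Defs
  imports "HOL-Analysis.Analysis"
begin

text \<open>The dual space of a (closed) subspace E of a real normed space 'a:
  bounded linear functionals on E, represented as functions on 'a that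
  vanish outside E (so that each functional has a unique representative).\<close>
definition dual_sp :: "'a::real_normed_vector set \<Rightarrow> ('a \<Rightarrow> real) set" where
  "dual_sp E = {f. (\<forall>x\<in>E. \<forall>y\<in>E. f (x + y) = f x + f y)
                 \<and> (\<forall>c. \<forall>x\<in>E. f (scaleR c x) = c * f x)
                 \<and> (\<exists>K. \<forall>x\<in>E. \<bar>f x\<bar> \<le> K * norm x)
                 \<and> (\<forall>x. x \<notin> E \<longrightarrow> f x = 0)}"

definition dnorm :: "'a::real_normed_vector set \<Rightarrow> ('a \<Rightarrow> real) \<Rightarrow> real" where
  "dnorm E f = Sup {\<bar>f x\<bar> | x. x \<in> E \<and> norm x \<le> 1}"

definition annih :: "'a::real_normed_vector set \<Rightarrow> 'a set \<Rightarrow> ('a \<Rightarrow> real) set" where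
  "annih V E = {f \<in> dual_sp E. \<forall>x\<in>V. f x = 0}"

definition has_HB :: "'a::real_normed_vector set \<Rightarrow> 'a set \<Rightarrow> bool" where
  "has_HB V E \<longleftrightarrow> (\<exists>P :: ('a \<Rightarrow> real) \<Rightarrow> ('a \<Rightarrow> real).
      (\<forall>f\<in>dual_sp E. P f \<in> dual_sp E)
    \<and> (\<forall>f\<in>dual_sp E. \<forall>g\<in>dual_sp E. P (\<lambda>x. f x + g x) = (\<lambda>x. P f x + P g x))
    \<and> (\<forall>c. \<forall>f\<in>dual_sp E. P (\<lambda>x. c * f x) = (\<lambda>x. c * P f x))
    \<and> (\<forall>f\<in>dual_sp E. P (P f) = P f)
    \<and> P ` dual_sp E = annih V E
    \<and> (\<forall>f\<in>dual_sp E. dnorm E (P f) \<le> dnorm E f)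
    \<and> (\<forall>g\<in>{(\<lambda>x. f x - P f x) | f. f \<in> dual_sp E}. \<forall>w\<in>annih V E. w \<noteq> (\<lambda>x. 0) \<longrightarrow>
          dnorm E (\<lambda>x. g x + w x) > dnorm E g \<and> dnorm E (\<lambda>x. g x + w x) \<ge> dnorm E w))"

end

theory Submission
  imports Defs
begin

definition extg :: "'a::real_normed_vector set \<Rightarrow> ('a \<Rightarrow> real) \<Rightarrow> real \<Rightarrow> ('a \<times> real) set \<Rightarrow> bool" where
  "extg Y f C S \<longleftrightarrow> (\<forall>x a b. (x,a)\<in>S \<longrightarrow> (x,b)\<in>S \<longrightarrow> a=b)
    \<and> (\<forall>x a y b. (x,a)\<in>S \<longrightarrow> (y,b)\<in>S \<longrightarrow> (x+y,a+b)\<in>S)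
    \<and> (\<forall>x a c. (x,a)\<in>S \<longrightarrow> (c *\<^sub>R x, c*a)\<in>S)
    \<and> (\<forall>y\<in>Y. (y, f y)\<in>S)
    \<and> (\<forall>x a. (x,a)\<in>S \<longrightarrow> a \<le> C * norm x)"

lemma extg_chain:
  assumes "C \<in> chains {S. extg Y f K S}" "C \<noteq> {}"
  shows "extg Y f K (\<Union>C)"
  proof -
  have ex: "\<And>S. S \<in> C \<Longrightarrow> extg Y f K S" using chainsD2[OF assms(1)] by blast
  have up: "\<exists>U\<in>C. S \<subseteq> U \<and> T \<subseteq> U" if "S \<in> C" "T \<in> C" for S T
    using chainsD[OF assms(1) that] that by blast
  show ?thesis unfolding extg_def
  proof (intro conjI allI impI ballI)
    fix x a b assume "(x,a) \<in> \<Union>C" "(x,b) \<in> \<Union>C"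
    then obtain S T where "S\<in>C" "T\<in>C" "(x,a)\<in>S" "(x,b)\<in>T" by blast
    then obtain U where "U \<in> C" "(x,a)\<in>U" "(x,b)\<in>U" using up by blast
    then show "a = b" using ex[of U] unfolding extg_def by blast
  next
    fix x a y b assume "(x,a) \<in> \<Union>C" "(y,b) \<in> \<Union>C"
    then obtain S T where "S\<in>C" "T\<in>C" "(x,a)\<in>S" "(y,b)\<in>T" by blast
    then obtain U where "U \<in> C" "(x,a)\<in>U" "(y,b)\<in>U" using up by blast
    then have "(x+y,a+b) \<in> U" using ex[of U] unfolding extg_def by blast
    then show "(x+y,a+b) \<in> \<Union>C" using \<open>U \<in> C\<close> by blast
  next
    fix x a c assume "(x,a) \<in> \<Union>C"
    then obtain U where "U \<in> C" "(x,a)\<in>U" by blast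
    then have "(c *\<^sub>R x, c*a) \<in> U" using ex[of U] unfolding extg_def by blast
    then show "(c *\<^sub>R x, c*a) \<in> \<Union>C" using \<open>U \<in> C\<close> by blast
  next
    fix y assume "y \<in> Y"
    obtain U where "U \<in> C" using assms(2) by blast
    then have "(y, f y) \<in> U" using ex[of U] \<open>y \<in> Y\<close> unfolding extg_def by blast
    then show "(y, f y) \<in> \<Union>C" using \<open>U \<in> C\<close> by blast
  next
    fix x a assume "(x,a) \<in> \<Union>C"
    then obtain U where "U \<in> C" "(x,a)\<in>U" by blast
    then show "a \<le> K * norm x" using ex[of U] unfolding extg_def by blast
  qed
qed

lemma extg_step:
  fixes x0 :: "'a::real_normed_vector"
  assumes e: "extg Y f K S" and K: "K \<ge> 0" and x0: "\<And>a. (x0,a) \<notin> S" and Yne: "Y \<noteq> {}"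
  shows "\<exists>S'. extg Y f K S' \<and> S \<subseteq> S' \<and> S' \<noteq> S"
proof -
  have fn1: "\<And>x a b. (x,a)\<in>S \<Longrightarrow> (x,b)\<in>S \<Longrightarrow> a=b"
   and add: "\<And>x a y b. (x,a)\<in>S \<Longrightarrow> (y,b)\<in>S \<Longrightarrow> (x+y,a+b)\<in>S"
   and scl: "\<And>x a c. (x,a)\<in>S \<Longrightarrow> (c *\<^sub>R x, c*a)\<in>S"
   and bnd: "\<And>x a. (x,a)\<in>S \<Longrightarrow> a \<le> K * norm x"
    using e unfolding extg_def by blast+
  have Y: "\<And>y. y\<in>Y \<Longrightarrow> (y, f y)\<in>S" using e unfolding extg_def by blast
  obtain z0 a0 where z0: "(z0,a0) \<in> S" using Y Yne by blast
  have zero: "(0,0) \<in> S" using scl[OF z0, of 0] by simp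
  define L where "L = {a - K * norm (m - x0) | m a. (m,a) \<in> S}"
  define c where "c = Sup L"
  have key: "a - K * norm (m - x0) \<le> K * norm (m' + x0) - a'" if "(m,a)\<in>S" "(m',a')\<in>S" for m a m' a'
  proof -
    have "a + a' \<le> K * norm (m + m')" using bnd[OF add[OF that]] .
    also have "norm (m + m') \<le> norm (m - x0) + norm (m' + x0)"
      using norm_triangle_ineq[of "m - x0" "m' + x0"] by simp
    hence "K * norm (m + m') \<le> K * norm (m - x0) + K * norm (m' + x0)"
      using K mult_left_mono by (simp add: distrib_left[symmetric])
    finally show ?thesis by simp
  qed
  have Lne: "L \<noteq> {}" using zero unfolding L_def by blast
  have Lbdd: "bdd_above L"
  proof (rule bdd_aboveI)
    fix l assume "l \<in> L"
    then obtain m a where "l = a - K * norm (m - x0)" "(m,a) \<in> S" unfolding L_def by blast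
    then show "l \<le> K * norm (0 + x0) - 0" using key[OF _ zero] by blast
  qed
  have c1: "a - K * norm (m - x0) \<le> c" if "(m,a)\<in>S" for m a
    unfolding c_def by (rule cSup_upper[OF _ Lbdd]) (use that L_def in blast)
  have c2: "c \<le> K * norm (m + x0) - a" if "(m,a)\<in>S" for m a
    unfolding c_def by (rule cSup_least[OF Lne]) (use key[OF _ that] L_def in blast)
  define S' where "S' = {(m + t *\<^sub>R x0, a + t * c) | m a t. (m,a) \<in> S}"
  have "extg Y f K S'"
    unfolding extg_def
  proof (intro conjI allI impI ballI)
    fix x a b assume "(x,a) \<in> S'" "(x,b) \<in> S'"
    then obtain m1 a1 t1 m2 a2 t2 where h: "x = m1 + t1 *\<^sub>R x0" "a = a1 + t1 * c" "(m1,a1) \<in> S"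
      "x = m2 + t2 *\<^sub>R x0" "b = a2 + t2 * c" "(m2,a2) \<in> S" unfolding S'_def by blast
    show "a = b"
    proof (cases "t1 = t2")
      case True
      then have "m1 = m2" using h by simp
      then show ?thesis using h True fn1 by blast
    next
      case False
      have "(m2 + (-1) *\<^sub>R m1, a2 + (-1) * a1) \<in> S" using add[OF h(6) scl[OF h(3)]] .
      from scl[OF this, of "1/(t1 - t2)"]
      have "((1/(t1 - t2)) *\<^sub>R (m2 - m1), (1/(t1 - t2)) * (a2 - a1)) \<in> S" by simp
      moreover have "(1/(t1 - t2)) *\<^sub>R (m2 - m1) = x0"
      proof -
        have "m2 - m1 = (t1 - t2) *\<^sub>R x0" using h(1) h(4) by (simp add: algebra_simps)
        then show ?thesis using False by simp
      qed
      ultimately show ?thesis using x0 by simp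
    qed
  next
    fix x a y b assume "(x,a) \<in> S'" "(y,b) \<in> S'"
    then obtain m1 a1 t1 m2 a2 t2 where h: "x = m1 + t1 *\<^sub>R x0" "a = a1 + t1 * c" "(m1,a1) \<in> S"
      "y = m2 + t2 *\<^sub>R x0" "b = a2 + t2 * c" "(m2,a2) \<in> S" unfolding S'_def by blast
    have "((m1 + m2) + (t1 + t2) *\<^sub>R x0, (a1 + a2) + (t1 + t2) * c) \<in> S'"
      unfolding S'_def using add[OF h(3) h(6)] by blast
    moreover have "(m1 + m2) + (t1 + t2) *\<^sub>R x0 = x + y" "(a1 + a2) + (t1 + t2) * c = a + b"
      using h by (simp_all add: algebra_simps)
    ultimately show "(x+y, a+b) \<in> S'" by simp
  next
    fix x a k assume "(x,a) \<in> S'"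
    then obtain m1 a1 t1 where h: "x = m1 + t1 *\<^sub>R x0" "a = a1 + t1 * c" "(m1,a1) \<in> S"
      unfolding S'_def by blast
    have "(k *\<^sub>R m1 + (k * t1) *\<^sub>R x0, k * a1 + (k * t1) * c) \<in> S'"
      unfolding S'_def using scl[OF h(3)] by blast
    moreover have "k *\<^sub>R m1 + (k * t1) *\<^sub>R x0 = k *\<^sub>R x" "k * a1 + (k * t1) * c = k * a"
      using h by (simp_all add: algebra_simps)
    ultimately show "(k *\<^sub>R x, k * a) \<in> S'" by simp
  next
    fix y assume "y \<in> Y"
    have "(y + 0 *\<^sub>R x0, f y + 0 * c) \<in> S'" unfolding S'_def using Y[OF \<open>y \<in> Y\<close>] by blast
    then show "(y, f y) \<in> S'" by simp
  next
    fix x a assume "(x,a) \<in> S'"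
    then obtain m a1 t where h: "x = m + t *\<^sub>R x0" "a = a1 + t * c" "(m,a1) \<in> S"
      unfolding S'_def by blast
    consider "t = 0" | "t > 0" | "t < 0" by linarith
    then show "a \<le> K * norm x"
    proof cases
      case 1 then show ?thesis using h bnd by simp
    next
      case 2
      have s: "((1/t) *\<^sub>R m, (1/t) * a1) \<in> S" using scl[OF h(3)] .
      have "c \<le> K * norm ((1/t) *\<^sub>R m + x0) - (1/t) * a1" using c2[OF s] .
      hence "t * c \<le> t * (K * norm ((1/t) *\<^sub>R m + x0) - (1/t) * a1)" using 2 by simp
      also have "\<dots> = K * norm (t *\<^sub>R ((1/t) *\<^sub>R m + x0)) - a1"
      proof -
        have "norm (t *\<^sub>R ((1/t) *\<^sub>R m + x0)) = t * norm ((1/t) *\<^sub>R m + x0)" using 2 by simp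
        then show ?thesis using 2 by (simp add: algebra_simps)
      qed
      also have "t *\<^sub>R ((1/t) *\<^sub>R m + x0) = x" using 2 h by (simp add: algebra_simps)
      finally show ?thesis using h by simp
    next
      case 3
      define s where "s = - t"
      have sp: "s > 0" using 3 s_def by simp
      have s': "((1/s) *\<^sub>R m, (1/s) * a1) \<in> S" using scl[OF h(3)] .
      have "(1/s) * a1 - K * norm ((1/s) *\<^sub>R m - x0) \<le> c" using c1[OF s'] .
      hence "s * ((1/s) * a1 - K * norm ((1/s) *\<^sub>R m - x0)) \<le> s * c" using sp by simp
      moreover have "s * ((1/s) * a1 - K * norm ((1/s) *\<^sub>R m - x0)) = a1 - K * norm (s *\<^sub>R ((1/s) *\<^sub>R m - x0))"
      proof -
        have "norm (s *\<^sub>R ((1/s) *\<^sub>R m - x0)) = s * norm ((1/s) *\<^sub>R m - x0)" using sp by simp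
        then show ?thesis using sp by (simp add: algebra_simps)
      qed
      moreover have "s *\<^sub>R ((1/s) *\<^sub>R m - x0) = x" using sp h s_def by (simp add: algebra_simps)
      ultimately have "a1 - K * norm x \<le> s * c" by simp
      then show ?thesis using h(2) s_def by simp
    qed
  qed
  moreover have "S \<subseteq> S'"
  proof
    fix p assume "p \<in> S" then obtain m a where "p = (m,a)" "(m,a) \<in> S" by (cases p) auto
    moreover have "(m + 0 *\<^sub>R x0, a + 0 * c) \<in> S'" unfolding S'_def using \<open>(m,a) \<in> S\<close> by blast
    ultimately show "p \<in> S'" by simp
  qed
  moreover have "(0 + 1 *\<^sub>R x0, 0 + 1 * c) \<in> S'" unfolding S'_def using zero by blast
  hence "(x0, c) \<in> S'" by simp
  ultimately show ?thesis using x0 by blast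
qed


lemma hahn_banach:
  fixes f :: "'a::real_normed_vector \<Rightarrow> real"
  assumes sY: "subspace Y"
    and fadd: "\<forall>x\<in>Y. \<forall>y\<in>Y. f (x + y) = f x + f y"
    and fhom: "\<forall>c. \<forall>x\<in>Y. f (c *\<^sub>R x) = c * f x"
    and fbnd: "\<forall>x\<in>Y. \<bar>f x\<bar> \<le> K * norm x" and K: "K \<ge> 0"
  shows "\<exists>F. (\<forall>x y. F (x + y) = F x + F y) \<and> (\<forall>c x. F (c *\<^sub>R x) = c * F x)
             \<and> (\<forall>x\<in>Y. F x = f x) \<and> (\<forall>x. \<bar>F x\<bar> \<le> K * norm x)"
proof -
  define S0 where "S0 = {(y, f y) | y. y \<in> Y}"
  have Yne: "Y \<noteq> {}" using sY subspace_0 by blast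
  have e0: "extg Y f K S0" unfolding extg_def S0_def
    using fadd fhom fbnd subspace_add[OF sY] subspace_scale[OF sY] by (auto simp: abs_le_iff)
  have "\<forall>C\<in>chains {S. extg Y f K S}. \<exists>U\<in>{S. extg Y f K S}. \<forall>X\<in>C. X \<subseteq> U"
  proof
    fix C assume C: "C \<in> chains {S. extg Y f K S}"
    show "\<exists>U\<in>{S. extg Y f K S}. \<forall>X\<in>C. X \<subseteq> U"
    proof (cases "C = {}")
      case True then show ?thesis using e0 by blast
    next
      case False then show ?thesis using extg_chain[OF C False] by blast
    qed
  qed
  from Zorn_Lemma2[OF this] obtain M where M: "extg Y f K M"
    and max: "\<And>X. extg Y f K X \<Longrightarrow> M \<subseteq> X \<Longrightarrow> X = M" by blast
  have tot: "\<exists>a. (x,a) \<in> M" for x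
  proof (rule ccontr)
    assume "\<nexists>a. (x, a) \<in> M"
    then obtain S' where "extg Y f K S'" "M \<subseteq> S'" "S' \<noteq> M" using extg_step[OF M K _ Yne, of x] by blast
    then show False using max by blast
  qed
  define F where "F x = (SOME a. (x,a) \<in> M)" for x
  have FM: "(x, F x) \<in> M" for x unfolding F_def using tot[of x] by (rule someI_ex)
  have fn1: "\<And>x a b. (x,a)\<in>M \<Longrightarrow> (x,b)\<in>M \<Longrightarrow> a=b"
   and add: "\<And>x a y b. (x,a)\<in>M \<Longrightarrow> (y,b)\<in>M \<Longrightarrow> (x+y,a+b)\<in>M"
   and scl: "\<And>x a c. (x,a)\<in>M \<Longrightarrow> (c *\<^sub>R x, c*a)\<in>M"
   and bnd: "\<And>x a. (x,a)\<in>M \<Longrightarrow> a \<le> K * norm x"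
   and ext: "\<And>y. y \<in> Y \<Longrightarrow> (y, f y) \<in> M"
    using M unfolding extg_def by blast+
  have Fadd: "F (x + y) = F x + F y" for x y using fn1[OF FM add[OF FM FM]] .
  have Fhom: "F (c *\<^sub>R x) = c * F x" for c x using fn1[OF FM scl[OF FM]] .
  have Fext: "F y = f y" if "y \<in> Y" for y using fn1[OF FM ext[OF that]] .
  have Fbnd: "\<bar>F x\<bar> \<le> K * norm x" for x
  proof -
    have "F x \<le> K * norm x" using bnd[OF FM] .
    moreover have "F ((-1) *\<^sub>R x) \<le> K * norm ((-1) *\<^sub>R x)" using bnd[OF FM] .
    ultimately show ?thesis using Fhom[of "-1" x] by simp
  qed
  show ?thesis using Fadd Fhom Fext Fbnd by blast
qed


lemma dual_zero: "f \<in> dual_sp E \<Longrightarrow> f 0 = 0"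
  unfolding dual_sp_def by (cases "(0::'a) \<in> E") (auto dest: spec[of _ 0])

lemma dual_bdd:
  assumes "f \<in> dual_sp E"
  shows "bdd_above {\<bar>f x\<bar> | x. x \<in> E \<and> norm x \<le> 1}"
proof -
  obtain K where K: "\<forall>x\<in>E. \<bar>f x\<bar> \<le> K * norm x" using assms unfolding dual_sp_def by blast
  show ?thesis
  proof (rule bdd_aboveI)
    fix l assume "l \<in> {\<bar>f x\<bar> | x. x \<in> E \<and> norm x \<le> 1}"
    then obtain x where x: "l = \<bar>f x\<bar>" "x \<in> E" "norm x \<le> 1" by blast
    have "K * norm x \<le> \<bar>K\<bar>"
      by (metis abs_ge_self abs_mult abs_norm_cancel mult.comm_neutral mult_left_mono abs_ge_zero order_trans x(3))
    then show "l \<le> \<bar>K\<bar>" using K x by force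
  qed
qed

lemma dn_nonneg:
  assumes "subspace E" "f \<in> dual_sp E"
  shows "0 \<le> dnorm E f"
proof -
  have "\<bar>f 0\<bar> \<in> {\<bar>f x\<bar> | x. x \<in> E \<and> norm x \<le> 1}" using subspace_0[OF assms(1)] by force
  then have "\<bar>f 0\<bar> \<le> dnorm E f" unfolding dnorm_def by (rule cSup_upper[OF _ dual_bdd[OF assms(2)]])
  then show ?thesis by simp
qed

lemma dn_bound:
  assumes E: "subspace E" and f: "f \<in> dual_sp E" and x: "x \<in> E"
  shows "\<bar>f x\<bar> \<le> dnorm E f * norm x"
proof (cases "x = 0")
  case True then show ?thesis using dual_zero[OF f] by simp
next
  case False
  define u where "u = (1 / norm x) *\<^sub>R x"
  have uE: "u \<in> E" unfolding u_def using subspace_scale[OF E x] .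
  have nu: "norm u = 1" unfolding u_def using False by simp
  have "\<bar>f u\<bar> \<in> {\<bar>f x\<bar> | x. x \<in> E \<and> norm x \<le> 1}" using uE nu by force
  then have fu: "\<bar>f u\<bar> \<le> dnorm E f" unfolding dnorm_def by (rule cSup_upper[OF _ dual_bdd[OF f]])
  have "f u = (1 / norm x) * f x" unfolding u_def using f x unfolding dual_sp_def by blast
  then have "\<bar>f x\<bar> = norm x * \<bar>f u\<bar>" using False by (simp add: abs_mult)
  also have "\<dots> \<le> norm x * dnorm E f" using fu by (simp add: mult_left_mono)
  finally show ?thesis by (simp add: mult.commute)
qed

lemma dn_least:
  assumes E: "subspace E" and C: "C \<ge> 0" and b: "\<forall>x\<in>E. \<bar>f x\<bar> \<le> C * norm x"
  shows "dnorm E f \<le> C"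
  unfolding dnorm_def
proof (rule cSup_least)
  show "{\<bar>f x\<bar> | x. x \<in> E \<and> norm x \<le> 1} \<noteq> {}" using subspace_0[OF E] by force
next
  fix l assume "l \<in> {\<bar>f x\<bar> | x. x \<in> E \<and> norm x \<le> 1}"
  then obtain x where x: "l = \<bar>f x\<bar>" "x \<in> E" "norm x \<le> 1" by blast
  have "C * norm x \<le> C" using C x(3) by (simp add: mult_left_le)
  then show "l \<le> C" using b x by force
qed

lemma dual_add: "f \<in> dual_sp E \<Longrightarrow> g \<in> dual_sp E \<Longrightarrow> (\<lambda>x. f x + g x) \<in> dual_sp E"
proof -
  assume f: "f \<in> dual_sp E" and g: "g \<in> dual_sp E"
  obtain K1 where K1: "\<forall>x\<in>E. \<bar>f x\<bar> \<le> K1 * norm x" using f unfolding dual_sp_def by blast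
  obtain K2 where K2: "\<forall>x\<in>E. \<bar>g x\<bar> \<le> K2 * norm x" using g unfolding dual_sp_def by blast
  have "\<forall>x\<in>E. \<bar>f x + g x\<bar> \<le> (K1 + K2) * norm x"
  proof
    fix x assume "x \<in> E"
    then have "\<bar>f x\<bar> + \<bar>g x\<bar> \<le> (K1 + K2) * norm x" using K1 K2 by (simp add: distrib_right add_mono)
    then show "\<bar>f x + g x\<bar> \<le> (K1 + K2) * norm x" by (meson abs_triangle_ineq order_trans)
  qed
  then have bd: "\<exists>K. \<forall>x\<in>E. \<bar>f x + g x\<bar> \<le> K * norm x" by blast
  show ?thesis using f g bd unfolding dual_sp_def by (auto simp: algebra_simps)
qed

lemma dual_scale: "f \<in> dual_sp E \<Longrightarrow> (\<lambda>x. c * f x) \<in> dual_sp E"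
proof -
  assume f: "f \<in> dual_sp E"
  obtain K1 where K1: "\<forall>x\<in>E. \<bar>f x\<bar> \<le> K1 * norm x" using f unfolding dual_sp_def by blast
  have "\<forall>x\<in>E. \<bar>c * f x\<bar> \<le> (\<bar>c\<bar> * K1) * norm x"
    using K1 by (simp add: abs_mult mult.assoc mult_left_mono)
  then have bd: "\<exists>K. \<forall>x\<in>E. \<bar>c * f x\<bar> \<le> K * norm x" by blast
  show ?thesis using f bd unfolding dual_sp_def by (auto simp: algebra_simps)
qed

lemma dual_diff: "f \<in> dual_sp E \<Longrightarrow> g \<in> dual_sp E \<Longrightarrow> (\<lambda>x. f x - g x) \<in> dual_sp E"
  using dual_add[of f E "\<lambda>x. (-1) * g x"] dual_scale[of g E "-1"] by simp


lemma restr_dual: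
  assumes Y: "subspace Y" and F: "F \<in> dual_sp UNIV"
  shows "(\<lambda>x. if x\<in>Y then F x else 0) \<in> dual_sp Y"
proof -
  obtain K where K: "\<forall>x. \<bar>F x\<bar> \<le> K * norm x" using F unfolding dual_sp_def by blast
  have bd: "\<exists>K. \<forall>x\<in>Y. \<bar>(if x\<in>Y then F x else 0)\<bar> \<le> K * norm x" using K by auto
  show ?thesis using F bd subspace_add[OF Y] subspace_scale[OF Y] unfolding dual_sp_def by auto
qed

lemma restr_dn:
  assumes Y: "subspace Y" and F: "F \<in> dual_sp UNIV"
  shows "dnorm Y (\<lambda>x. if x\<in>Y then F x else 0) \<le> dnorm UNIV F"
  by (rule dn_least[OF Y dn_nonneg[OF subspace_UNIV F]]) (use dn_bound[OF subspace_UNIV F] in auto)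

lemma extend:
  assumes Y: "subspace Y" and f: "f \<in> dual_sp Y"
  shows "\<exists>F\<in>dual_sp UNIV. (\<lambda>x. if x\<in>Y then F x else 0) = f \<and> dnorm UNIV F = dnorm Y f"
proof -
  have fb: "\<forall>x\<in>Y. \<bar>f x\<bar> \<le> dnorm Y f * norm x" using dn_bound[OF Y f] by blast
  have fa: "\<forall>x\<in>Y. \<forall>y\<in>Y. f (x + y) = f x + f y" and fh: "\<forall>c. \<forall>x\<in>Y. f (c *\<^sub>R x) = c * f x"
    and fo: "\<forall>x. x \<notin> Y \<longrightarrow> f x = 0" using f unfolding dual_sp_def by blast+
  obtain F where Fa: "\<forall>x y. F (x + y) = F x + F y" and Fh: "\<forall>c x. F (c *\<^sub>R x) = c * F x"
    and Fe: "\<forall>x\<in>Y. F x = f x" and Fb: "\<forall>x. \<bar>F x\<bar> \<le> dnorm Y f * norm x"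
    using hahn_banach[OF Y fa fh fb dn_nonneg[OF Y f]] by blast
  have FX: "F \<in> dual_sp UNIV" unfolding dual_sp_def using Fa Fh Fb by blast
  have r: "(\<lambda>x. if x\<in>Y then F x else 0) = f" using Fe fo by auto
  have "dnorm UNIV F \<le> dnorm Y f" by (rule dn_least[OF subspace_UNIV dn_nonneg[OF Y f]]) (use Fb in auto)
  moreover have "dnorm Y f \<le> dnorm UNIV F" using restr_dn[OF Y FX] r by simp
  ultimately show ?thesis using FX r by force
qed


theorem theorem3p14:
  fixes Y Z :: "'a::banach set"
  assumes "subspace Y" and "closed Y"
    and "subspace Z" and "closed Z"
    and "Z \<subseteq> Y"
    and "has_HB Z (UNIV :: 'a set)"
  shows "has_HB Z Y"
proof -
  note Y = assms(1) and ZY = assms(5)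
  define X where "X = dual_sp (UNIV :: 'a set)"
  obtain P :: "('a \<Rightarrow> real) \<Rightarrow> ('a \<Rightarrow> real)" where HB: "(\<forall>f\<in>dual_sp UNIV. P f \<in> dual_sp UNIV)
    \<and> (\<forall>f\<in>dual_sp UNIV. \<forall>g\<in>dual_sp UNIV. P (\<lambda>x. f x + g x) = (\<lambda>x. P f x + P g x))
    \<and> (\<forall>c. \<forall>f\<in>dual_sp UNIV. P (\<lambda>x. c * f x) = (\<lambda>x. c * P f x))
    \<and> (\<forall>f\<in>dual_sp UNIV. P (P f) = P f)
    \<and> P ` dual_sp UNIV = annih Z UNIV
    \<and> (\<forall>f\<in>dual_sp UNIV. dnorm UNIV (P f) \<le> dnorm UNIV f)
    \<and> (\<forall>g\<in>{(\<lambda>x. f x - P f x) | f. f \<in> dual_sp UNIV}. \<forall>w\<in>annih Z UNIV. w \<noteq> (\<lambda>x. 0) \<longrightarrow>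
          dnorm UNIV (\<lambda>x. g x + w x) > dnorm UNIV g \<and> dnorm UNIV (\<lambda>x. g x + w x) \<ge> dnorm UNIV w)"
    using assms(6) unfolding has_HB_def by blast
  have PX: "\<And>F. F \<in> X \<Longrightarrow> P F \<in> X"
    and Padd: "\<And>F G. F \<in> X \<Longrightarrow> G \<in> X \<Longrightarrow> P (\<lambda>x. F x + G x) = (\<lambda>x. P F x + P G x)"
    and Pscl: "\<And>c F. F \<in> X \<Longrightarrow> P (\<lambda>x. c * F x) = (\<lambda>x. c * P F x)"
    and Pid: "\<And>F. F \<in> X \<Longrightarrow> P (P F) = P F"
    and Prng: "P ` X = annih Z UNIV"
    and Pn: "\<And>F. F \<in> X \<Longrightarrow> dnorm UNIV (P F) \<le> dnorm UNIV F"
    using HB unfolding X_def by blast+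
  have Pstr0: "\<forall>g\<in>{(\<lambda>x. f x - P f x) | f. f \<in> X}. \<forall>w\<in>annih Z UNIV. w \<noteq> (\<lambda>x. 0) \<longrightarrow>
          dnorm UNIV (\<lambda>x. g x + w x) > dnorm UNIV g \<and> dnorm UNIV (\<lambda>x. g x + w x) \<ge> dnorm UNIV w"
    using HB unfolding X_def by (elim conjE)
  note Pstr = Pstr0[rule_format]
  have PZ: "P F z = 0" if "F \<in> X" "z \<in> Z" for F z
    using Prng that unfolding annih_def by blast
  have Pfix: "P W = W" if WA: "W \<in> annih Z UNIV" for W
  proof -
    obtain H where "H \<in> X" "W = P H" using WA Prng by force
    then show ?thesis using Pid by simp
  qed
  define Q where "Q F = (\<lambda>x. F x - P F x)" for F
  have QX: "Q F \<in> X" if "F \<in> X" for F unfolding Q_def X_def using dual_diff that PX X_def by blast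
  have QZ: "Q F = Q H" if "F \<in> X" "H \<in> X" "\<forall>z\<in>Z. F z = H z" for F H
  proof -
    have mH: "(\<lambda>x. (-1) * H x) \<in> X" using dual_scale that(2) X_def by blast
    have W: "(\<lambda>x. F x - H x) \<in> annih Z UNIV"
      unfolding annih_def using dual_diff that X_def by auto
    have "P (\<lambda>x. F x - H x) = P (\<lambda>x. F x + (\<lambda>x. (-1) * H x) x)" by simp
    also have "\<dots> = (\<lambda>x. P F x + P (\<lambda>x. (-1) * H x) x)" using Padd[OF that(1) mH] .
    also have "\<dots> = (\<lambda>x. P F x - P H x)" using Pscl[OF that(2), of "-1"] by simp
    finally have "(\<lambda>x. P F x - P H x) = (\<lambda>x. F x - H x)" using Pfix[OF W] by simp
    then have "\<And>x. P F x - P H x = F x - H x" by metis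
    then show ?thesis unfolding Q_def by (auto simp: algebra_simps)
  qed
  have Qadd: "Q (\<lambda>x. F x + G x) = (\<lambda>x. Q F x + Q G x)" if "F \<in> X" "G \<in> X" for F G
    unfolding Q_def using Padd[OF that] by (simp add: algebra_simps)
  have Qscl: "Q (\<lambda>x. c * F x) = (\<lambda>x. c * Q F x)" if "F \<in> X" for c F
    unfolding Q_def using Pscl[OF that] by (simp add: algebra_simps)
  have Q0: "Q (\<lambda>x. 0) = (\<lambda>x. 0)"
  proof -
    have z: "(\<lambda>x. 0) \<in> X" unfolding X_def dual_sp_def by (auto intro!: exI[of _ 0])
    have "Q (\<lambda>x. 0 * (0::real)) = (\<lambda>x. 0 * Q (\<lambda>x. 0) x)" using Qscl[OF z, of 0] by simp
    then show ?thesis by simp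
  qed
  define r where "r F = (\<lambda>x. if x \<in> Y then F x else 0)" for F :: "'a \<Rightarrow> real"
  have rY: "r F \<in> dual_sp Y" if "F \<in> X" for F unfolding r_def using restr_dual[OF Y] that X_def by blast
  have rdn: "dnorm Y (r F) \<le> dnorm UNIV F" if "F \<in> X" for F unfolding r_def using restr_dn[OF Y] that X_def by blast
  have extY: "\<exists>F\<in>X. r F = f \<and> dnorm UNIV F = dnorm Y f" if "f \<in> dual_sp Y" for f
    unfolding r_def X_def using extend[OF Y that] .
  define E where "E f = (SOME F. F \<in> X \<and> r F = f)" for f
  have Eok: "E f \<in> X \<and> r (E f) = f" if "f \<in> dual_sp Y" for f
    unfolding E_def using extY[OF that] by (metis (mono_tags, lifting) someI_ex)
  have rZ: "F z = f z" if "r F = f" "z \<in> Z" for F f z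
    using that ZY unfolding r_def by force
  define q where "q f = r (Q (E f))" for f
  have qwell: "q f = r (Q F)" if "f \<in> dual_sp Y" "F \<in> X" "r F = f" for f F
  proof -
    have "Q (E f) = Q F" using QZ[of "E f" F] Eok[OF that(1)] that rZ by metis
    then show ?thesis unfolding q_def by simp
  qed
  have qY: "q f \<in> dual_sp Y" if "f \<in> dual_sp Y" for f unfolding q_def using rY QX Eok that by blast
  have qZ: "q f z = f z" if "f \<in> dual_sp Y" "z \<in> Z" for f z
  proof -
    have "z \<in> Y" using that ZY by blast
    then have "q f z = E f z - P (E f) z" unfolding q_def r_def Q_def by simp
    also have "\<dots> = E f z" using PZ Eok[OF that(1)] that(2) by simp
    also have "\<dots> = f z" using rZ Eok[OF that(1)] that(2) by blast
    finally show ?thesis .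
  qed
  have q_ann: "q h = (\<lambda>x. 0)" if "h \<in> dual_sp Y" "\<forall>z\<in>Z. h z = 0" for h
  proof -
    have z: "(\<lambda>x. 0) \<in> X" unfolding X_def dual_sp_def by (auto intro!: exI[of _ 0])
    have "Q (E h) = Q (\<lambda>x. 0)" using QZ[OF _ z] Eok[OF that(1)] rZ that(2) by metis
    then have QE: "Q (E h) = (\<lambda>x. 0)" using Q0 by simp
    have "q h = r (\<lambda>x. 0)" unfolding q_def QE ..
    also have "r (\<lambda>x. 0) = (\<lambda>x. 0)" unfolding r_def by (rule ext) simp
    finally show ?thesis .
  qed
  define PY where "PY f = (\<lambda>x. f x - q f x)" for f
  have PYY: "PY f \<in> dual_sp Y" if "f \<in> dual_sp Y" for f unfolding PY_def using dual_diff qY that by blast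
  have PYZ: "PY f z = 0" if "f \<in> dual_sp Y" "z \<in> Z" for f z unfolding PY_def using qZ that by simp
  have PYann: "PY f \<in> annih Z Y" if "f \<in> dual_sp Y" for f unfolding annih_def using PYY PYZ that by blast
  have PYfix: "PY h = h" if "h \<in> annih Z Y" for h
    using q_ann[of h] that unfolding annih_def PY_def by auto
  have last: "\<forall>g\<in>{(\<lambda>x. f x - PY f x) | f. f \<in> dual_sp Y}. \<forall>w\<in>annih Z Y. w \<noteq> (\<lambda>x. 0) \<longrightarrow>
          dnorm Y (\<lambda>x. g x + w x) > dnorm Y g \<and> dnorm Y (\<lambda>x. g x + w x) \<ge> dnorm Y w"
  proof (intro ballI impI)
    fix g w assume g: "g \<in> {(\<lambda>x. f x - PY f x) | f. f \<in> dual_sp Y}" and w: "w \<in> annih Z Y" and w0: "w \<noteq> (\<lambda>x. 0)"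
    then obtain f where f: "f \<in> dual_sp Y" and gf: "g = (\<lambda>x. f x - PY f x)" by blast
    have gq: "g = q f" unfolding gf PY_def by simp
    define G0 where "G0 = Q (E f)"
    have G0X: "G0 \<in> X" unfolding G0_def using QX Eok f by blast
    have G0set: "G0 \<in> {(\<lambda>x. F x - P F x) | F. F \<in> X}" unfolding G0_def Q_def using Eok f by blast
    have rG0: "r G0 = g" unfolding gq q_def G0_def ..
    have gY: "g \<in> dual_sp Y" using gq qY f by simp
    have wY: "w \<in> dual_sp Y" and wZ: "\<forall>z\<in>Z. w z = 0" using w unfolding annih_def by auto
    have dg: "dnorm Y g = dnorm UNIV G0"
    proof (rule antisym)
      show "dnorm Y g \<le> dnorm UNIV G0" using rdn[OF G0X] rG0 by simp
    next
      obtain H where H: "H \<in> X" "r H = g" "dnorm UNIV H = dnorm Y g" using extY[OF gY] by blast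
      show "dnorm UNIV G0 \<le> dnorm Y g"
      proof (cases "H = G0")
        case True then show ?thesis using H by simp
      next
        case False
        define W where "W = (\<lambda>x. H x - G0 x)"
        have "W \<in> dual_sp UNIV" unfolding W_def using dual_diff H(1) G0X unfolding X_def by blast
        moreover have "\<forall>z\<in>Z. W z = 0" unfolding W_def using rZ[OF H(2)] rZ[OF rG0] by simp
        ultimately have WA: "W \<in> annih Z UNIV" unfolding annih_def by blast
        have W0: "W \<noteq> (\<lambda>x. 0)" using False unfolding W_def by (auto simp: fun_eq_iff)
        have "(\<lambda>x. G0 x + W x) = H" unfolding W_def by simp
        then show ?thesis using Pstr[OF G0set WA W0] H(3) by simp
      qed
    qed
    have gw: "(\<lambda>x. g x + w x) \<in> dual_sp Y" using dual_add gY wY by blast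
    obtain K where K: "K \<in> X" "r K = (\<lambda>x. g x + w x)" "dnorm UNIV K = dnorm Y (\<lambda>x. g x + w x)"
      using extY[OF gw] by blast
    define W where "W = (\<lambda>x. K x - G0 x)"
    have "W \<in> dual_sp UNIV" unfolding W_def using dual_diff K(1) G0X unfolding X_def by blast
    moreover have "\<forall>z\<in>Z. W z = 0" unfolding W_def using rZ[OF K(2)] rZ[OF rG0] wZ by simp
    ultimately have WA: "W \<in> annih Z UNIV" unfolding annih_def by blast
    have rW: "r W = w"
    proof
      fix x show "r W x = w x"
      proof (cases "x \<in> Y")
        case True
        have "r K x = g x + w x" "r G0 x = g x" using K(2) rG0 by simp_all
        then have "K x = g x + w x" "G0 x = g x" using True unfolding r_def by simp_all
        then show ?thesis using True unfolding r_def W_def by simp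
      next
        case False then show ?thesis using wY unfolding r_def dual_sp_def by auto
      qed
    qed
    have W0: "W \<noteq> (\<lambda>x. 0)"
    proof
      assume "W = (\<lambda>x. 0)"
      then have "r W = (\<lambda>x. 0)" unfolding r_def by auto
      then show False using rW w0 by simp
    qed
    have KW: "(\<lambda>x. G0 x + W x) = K" unfolding W_def by simp
    have st: "dnorm UNIV K > dnorm UNIV G0 \<and> dnorm UNIV K \<ge> dnorm UNIV W"
      using Pstr[OF G0set WA W0] KW by simp
    have WX: "W \<in> X" using WA unfolding annih_def X_def by blast
    have "dnorm Y w \<le> dnorm UNIV W" using rdn[OF WX] rW by simp
    then show "dnorm Y (\<lambda>x. g x + w x) > dnorm Y g \<and> dnorm Y (\<lambda>x. g x + w x) \<ge> dnorm Y w"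
      using st K(3) dg by simp
  qed
  show ?thesis unfolding has_HB_def
  proof (intro exI[of _ PY] conjI ballI allI impI)
    fix f assume "f \<in> dual_sp Y" then show "PY f \<in> dual_sp Y" by (rule PYY)
  next
    fix f g assume f: "f \<in> dual_sp Y" and g: "g \<in> dual_sp Y"
    have fg: "(\<lambda>x. f x + g x) \<in> dual_sp Y" using dual_add f g by blast
    have X1: "(\<lambda>x. E f x + E g x) \<in> X" using dual_add Eok f g X_def by blast
    have r1: "r (\<lambda>x. E f x + E g x) = (\<lambda>x. f x + g x)"
    proof (rule ext)
      fix x
      have a: "r (E f) x = f x" "r (E g) x = g x" using Eok[OF f] Eok[OF g] by simp_all
      show "r (\<lambda>x. E f x + E g x) x = f x + g x" using a unfolding r_def by (cases "x \<in> Y") auto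
    qed
    have "q (\<lambda>x. f x + g x) = r (Q (\<lambda>x. E f x + E g x))" using qwell[OF fg X1 r1] .
    also have "\<dots> = (\<lambda>x. q f x + q g x)" unfolding q_def using Qadd Eok f g unfolding r_def by auto
    finally show "PY (\<lambda>x. f x + g x) = (\<lambda>x. PY f x + PY g x)" unfolding PY_def by (auto simp: algebra_simps)
  next
    fix c f assume f: "f \<in> dual_sp Y"
    have fc: "(\<lambda>x. c * f x) \<in> dual_sp Y" using dual_scale f by blast
    have X1: "(\<lambda>x. c * E f x) \<in> X" using dual_scale Eok f X_def by blast
    have r1: "r (\<lambda>x. c * E f x) = (\<lambda>x. c * f x)"
    proof (rule ext)
      fix x
      have a: "r (E f) x = f x" using Eok[OF f] by simp_all
      show "r (\<lambda>x. c * E f x) x = c * f x" using a unfolding r_def by (cases "x \<in> Y") auto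
    qed
    have "q (\<lambda>x. c * f x) = r (Q (\<lambda>x. c * E f x))" using qwell[OF fc X1 r1] .
    also have "\<dots> = (\<lambda>x. c * q f x)" unfolding q_def using Qscl Eok f unfolding r_def by auto
    finally show "PY (\<lambda>x. c * f x) = (\<lambda>x. c * PY f x)" unfolding PY_def by (auto simp: algebra_simps)
  next
    fix f assume "f \<in> dual_sp Y" then show "PY (PY f) = PY f" using PYfix PYann by blast
  next
    show "PY ` dual_sp Y = annih Z Y"
    proof
      show "PY ` dual_sp Y \<subseteq> annih Z Y" using PYann by blast
    next
      show "annih Z Y \<subseteq> PY ` dual_sp Y"
      proof
        fix h assume h: "h \<in> annih Z Y"
        then have "h = PY h" "h \<in> dual_sp Y" using PYfix unfolding annih_def by auto
        then show "h \<in> PY ` dual_sp Y" by blast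
      qed
    qed
  next
    fix f assume f: "f \<in> dual_sp Y"
    obtain F where F: "F \<in> X" "r F = f" "dnorm UNIV F = dnorm Y f" using extY[OF f] by blast
    have "PY f = r (P F)"
    proof -
      have "q f = r (Q F)" using qwell[OF f F(1,2)] .
      note qf = this
      show ?thesis
      proof (rule ext)
        fix x
        have a: "r F x = f x" "q f x = r (Q F) x" using F(2) qf by simp_all
        show "PY f x = r (P F) x" using a unfolding PY_def r_def Q_def by (cases "x \<in> Y") auto
      qed
    qed
    then have "dnorm Y (PY f) \<le> dnorm UNIV (P F)" using rdn PX F(1) by simp
    also have "\<dots> \<le> dnorm UNIV F" using Pn F(1) .
    finally show "dnorm Y (PY f) \<le> dnorm Y f" using F(3) by simp
  next
    fix g w assume g: "g \<in> {(\<lambda>x. f x - PY f x) | f. f \<in> dual_sp Y}" and w: "w \<in> annih Z Y" and w0: "w \<noteq> (\<lambda>x. 0)"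
    show "dnorm Y (\<lambda>x. g x + w x) > dnorm Y g" using last[rule_format, OF g w w0] by (rule conjunct1)
  next
    fix g w assume g: "g \<in> {(\<lambda>x. f x - PY f x) | f. f \<in> dual_sp Y}" and w: "w \<in> annih Z Y" and w0: "w \<noteq> (\<lambda>x. 0)"
    show "dnorm Y (\<lambda>x. g x + w x) \<ge> dnorm Y w" using last[rule_format, OF g w w0] by (rule conjunct2)
  qed
qed

end
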